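(* Let $(P_C)=\{(s_1,t_1),\dots,(s_k,t_k)\}$ be an $E$-unification problem with simple variable restriction, whose variables are $X\cup C$ with $X\cap C=\emptyset$, and let $\mathcal A=\mathbf F(X\cup C)/\theta$, where $\theta$ is the congruence generated by the pairs $(s_j,t_j)$, viewed as a regular subobject $\mathcal A^*$ of $\mathbf F(X)^*\times\mathbf F(C)^*\cong\mathbf F(X\cup C)^*$ in $\mathsf{Alg}^{op}_{fp}(E)$. Then the antisymmetric quotients (posetal reflections) of the preordered sets $U^{svr}_E(\mathcal A,C)$ and $U^{svr}_E(P_C)$ are isomorphic as posets.
   Context: $E$ is an equational theory in a signature $\mathcal L$ with at least one constant; $\mathbf F(Y)$ is the free $E$-algebra on a finite set $Y$, and $\mathsf{Alg}^{op}_{fp}(E)$ the opposite of the category of finitely presented $E$-algebras, with $\mathcal B^*$, $f^*$ denoting the formal duals of algebras and homomorphisms; products in it are dual to coproducts, so $\mathbf F(X)^*\times\mathbf F(C)^*\cong\mathbf F(X\cup C)^*$, and regular subobjects of $\mathcal B^*$ correspond to finitely presented quotients of $\mathcal B$. Symbolic side: a substitution $\sigma$ is $C$-invariant if $\sigma(c)=c$ for $c\in C$ and $\sigma(x)$ contains no variable from $C$ for $x\notin C$; $U^{svr}_E(P_C)$ is the set of $C$-invariant substitutions $\sigma$ with domain $Fm_{\mathcal L}(X\cup C)$ such that $\sigma(s_j)=_E\sigma(t_j)$ for all $j$ (where $=_E$ means equality provable in $E$), preordered by: $\tau\le_C\sigma$ iff $\tau=_E\theta\circ\sigma$ for some substitution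 $\theta$. Algebraic side: $U^{svr}_E(\mathcal A,C)$ is the set of homomorphisms $\sigma:\mathbf F(X)\to\mathbf F(Z)$ ($Z$ finite) such that $\sigma^*\times 1:\mathbf F(Z)^*\times\mathbf F(C)^*\to\mathbf F(X)^*\times\mathbf F(C)^*$ factors through the mono $\mathcal A^*\hookrightarrow\mathbf F(X)^*\times\mathbf F(C)^*$ (equivalently $\sigma+1:\mathbf F(X\cup C)\to\mathbf F(Z\cup C)$ factors through the quotient $\mathbf F(X\cup C)\to\mathcal A$), preordered by: $\gamma:\mathbf F(X)\to\mathbf F(W)$ is below $\sigma$ iff $k\circ\sigma=\gamma$ for some homomorphism $k:\mathbf F(Z)\to\mathbf F(W)$. *)

theory Defs
  imports Main
begin

datatype ('f, 'v) trm = Var 'v | Fn 'f "('f, 'v) trm list"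

fun vars :: "('f, 'v) trm \<Rightarrow> 'v set" where
  "vars (Var v) = {v}"
| "vars (Fn f ts) = (\<Union>t\<in>set ts. vars t)"

fun wf_trm :: "('f \<Rightarrow> nat) \<Rightarrow> ('f, 'v) trm \<Rightarrow> bool" where
  "wf_trm ar (Var v) = True"
| "wf_trm ar (Fn f ts) = (length ts = ar f \<and> (\<forall>t\<in>set ts. wf_trm ar t))"

fun subst :: "('v \<Rightarrow> ('f, 'w) trm) \<Rightarrow> ('f, 'v) trm \<Rightarrow> ('f, 'w) trm" where
  "subst \<sigma> (Var v) = \<sigma> v"
| "subst \<sigma> (Fn f ts) = Fn f (map (subst \<sigma>) ts)"

inductive eqE :: "('f \<Rightarrow> nat) \<Rightarrow> (('f, 'v) trm \<times> ('f, 'v) trm) set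
                   \<Rightarrow> ('f, 'v) trm \<Rightarrow> ('f, 'v) trm \<Rightarrow> bool"
  for ar E where
  refl: "wf_trm ar t \<Longrightarrow> eqE ar E t t"
| sym: "eqE ar E s t \<Longrightarrow> eqE ar E t s"
| trans: "eqE ar E s t \<Longrightarrow> eqE ar E t u \<Longrightarrow> eqE ar E s u"
| ax: "(l, r) \<in> E \<Longrightarrow> (\<forall>v. wf_trm ar (\<sigma> v)) \<Longrightarrow> eqE ar E (subst \<sigma> l) (subst \<sigma> r)"
| cong: "length ss = ar f \<Longrightarrow> list_all2 (eqE ar E) ss ts \<Longrightarrow> eqE ar E (Fn f ss) (Fn f ts)"

record ('f, 'a) alg =
  acarrier :: "'a set"
  aop :: "'f \<Rightarrow> 'a list \<Rightarrow> 'a"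

definition hom :: "('f \<Rightarrow> nat) \<Rightarrow> ('f, 'a) alg \<Rightarrow> ('f, 'b) alg \<Rightarrow> ('a \<Rightarrow> 'b) \<Rightarrow> bool" where
  "hom ar A B h \<longleftrightarrow> (\<forall>a\<in>acarrier A. h a \<in> acarrier B) \<and>
     (\<forall>f as. length as = ar f \<longrightarrow> set as \<subseteq> acarrier A \<longrightarrow>
        h (aop A f as) = aop B f (map h as))"

definition congruence :: "('f \<Rightarrow> nat) \<Rightarrow> ('f, 'a) alg \<Rightarrow> ('a \<times> 'a) set \<Rightarrow> bool" where
  "congruence ar A R \<longleftrightarrow> equiv (acarrier A) R \<and>
     (\<forall>f as bs. length as = ar f \<longrightarrow> list_all2 (\<lambda>a b. (a, b) \<in> R) as bs \<longrightarrow>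
        (aop A f as, aop A f bs) \<in> R)"

definition cong_gen :: "('f \<Rightarrow> nat) \<Rightarrow> ('f, 'a) alg \<Rightarrow> ('a \<times> 'a) set \<Rightarrow> ('a \<times> 'a) set" where
  "cong_gen ar A P = \<Inter>{R. congruence ar A R \<and> P \<subseteq> R}"

definition quot_alg :: "('f, 'a) alg \<Rightarrow> ('a \<times> 'a) set \<Rightarrow> ('f, 'a set) alg" where
  "quot_alg A R = \<lparr>acarrier = acarrier A // R,
     aop = (\<lambda>f cs. R `` {aop A f (map (\<lambda>c. SOME a. a \<in> c) cs)})\<rparr>"

definition quot_map :: "('a \<times> 'a) set \<Rightarrow> 'a \<Rightarrow> 'a set" where
  "quot_map R a = R `` {a}"

definition tcls :: "('f \<Rightarrow> nat) \<Rightarrow> (('f, 'v) trm \<times> ('f, 'v) trm) set \<Rightarrow> 'v set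
                    \<Rightarrow> ('f, 'v) trm \<Rightarrow> ('f, 'v) trm set" where
  "tcls ar E Y t = {u. wf_trm ar u \<and> vars u \<subseteq> Y \<and> eqE ar E t u}"

definition free_alg :: "('f \<Rightarrow> nat) \<Rightarrow> (('f, 'v) trm \<times> ('f, 'v) trm) set \<Rightarrow> 'v set
                        \<Rightarrow> ('f, ('f, 'v) trm set) alg" where
  "free_alg ar E Y = \<lparr>acarrier = {tcls ar E Y t | t. wf_trm ar t \<and> vars t \<subseteq> Y},
     aop = (\<lambda>f as. tcls ar E Y (Fn f (map (\<lambda>a. SOME t. t \<in> a) as)))\<rparr>"

text \<open>For \<open>\<sigma> : F(X) \<rightarrow> F(Z)\<close>, the coproduct map \<open>\<sigma> + 1 : F(X \<union> C) \<rightarrow> F(Z \<union> C)\<close>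
  (\<open>\<sigma>\<close> on the generators from X, identity on the generators from C).\<close>
definition plus_hom :: "('f \<Rightarrow> nat) \<Rightarrow> (('f, 'v) trm \<times> ('f, 'v) trm) set \<Rightarrow> 'v set \<Rightarrow> 'v set
     \<Rightarrow> 'v set \<Rightarrow> (('f, 'v) trm set \<Rightarrow> ('f, 'v) trm set) \<Rightarrow> ('f, 'v) trm set \<Rightarrow> ('f, 'v) trm set" where
  "plus_hom ar E X C Z \<sigma> a = tcls ar E (Z \<union> C)
     (subst (\<lambda>v. if v \<in> X then (SOME u. u \<in> \<sigma> (tcls ar E X (Var v))) else Var v)
            (SOME t. t \<in> a))"

definition theta_P where
  "theta_P ar E X C P = cong_gen ar (free_alg ar E (X \<union> C))
      {(tcls ar E (X \<union> C) s, tcls ar E (X \<union> C) t) | s t. (s, t) \<in> set P}"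

definition alg_A where
  "alg_A ar E X C P = quot_alg (free_alg ar E (X \<union> C)) (theta_P ar E X C P)"

text \<open>Algebraic side \<open>U^svr_E(\<A>, C)\<close>: pairs (Z, \<sigma>), \<open>\<sigma> : F(X) \<rightarrow> F(Z)\<close>, Z finite
  (disjoint from C, so that \<open>F(Z) + F(C) = F(Z \<union> C)\<close>), with \<open>\<sigma> + 1\<close> factoring
  through the quotient \<open>F(X \<union> C) \<rightarrow> \<A>\<close>.\<close>
definition U_alg where
  "U_alg ar E X C P = {(Z, \<sigma>). finite Z \<and> Z \<inter> C = {} \<and>
      hom ar (free_alg ar E X) (free_alg ar E Z) \<sigma> \<and>
      (\<exists>g. hom ar (alg_A ar E X C P) (free_alg ar E (Z \<union> C)) g \<and>
         (\<forall>a\<in>acarrier (free_alg ar E (X \<union> C)).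
             g (quot_map (theta_P ar E X C P) a) = plus_hom ar E X C Z \<sigma> a))}"

definition alg_le where
  "alg_le ar E X = (\<lambda>(W, \<gamma>) (Z, \<sigma>). \<exists>k. hom ar (free_alg ar E Z) (free_alg ar E W) k \<and>
      (\<forall>a\<in>acarrier (free_alg ar E X). k (\<sigma> a) = \<gamma> a))"

definition C_invariant where
  "C_invariant ar X C \<sigma> \<longleftrightarrow> (\<forall>v\<in>X \<union> C. wf_trm ar (\<sigma> v)) \<and> (\<forall>c\<in>C. \<sigma> c = Var c) \<and>
      (\<forall>x\<in>X \<union> C. x \<notin> C \<longrightarrow> vars (\<sigma> x) \<inter> C = {})"

definition U_sym where
  "U_sym ar E X C P = {\<sigma>. C_invariant ar X C \<sigma> \<and>
      (\<forall>(s, t)\<in>set P. eqE ar E (subst \<sigma> s) (subst \<sigma> t))}"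

definition sym_le where
  "sym_le ar E X C = (\<lambda>\<tau> \<sigma>. \<exists>\<theta>. (\<forall>v. wf_trm ar (\<theta> v)) \<and>
      (\<forall>v\<in>X \<union> C. eqE ar E (\<tau> v) (subst \<theta> (\<sigma> v))))"

definition pequiv :: "'a set \<Rightarrow> ('a \<Rightarrow> 'a \<Rightarrow> bool) \<Rightarrow> ('a \<times> 'a) set" where
  "pequiv A R = {(x, y). x \<in> A \<and> y \<in> A \<and> R x y \<and> R y x}"

definition cls_le :: "('a \<Rightarrow> 'a \<Rightarrow> bool) \<Rightarrow> 'a set \<Rightarrow> 'a set \<Rightarrow> bool" where
  "cls_le R a b \<longleftrightarrow> (\<exists>x\<in>a. \<exists>y\<in>b. R x y)"

definition posetal_reflections_iso ::
  "'a set \<Rightarrow> ('a \<Rightarrow> 'a \<Rightarrow> bool) \<Rightarrow> 'b set \<Rightarrow> ('b \<Rightarrow> 'b \<Rightarrow> bool) \<Rightarrow> bool" where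
  "posetal_reflections_iso A R B S \<longleftrightarrow>
     (\<exists>f. bij_betw f (A // pequiv A R) (B // pequiv B S) \<and>
        (\<forall>a\<in>A // pequiv A R. \<forall>b\<in>A // pequiv A R. cls_le R a b \<longleftrightarrow> cls_le S (f a) (f b)))"

end

theory Submission
  imports Defs
begin


lemma pe_class:
  "pequiv D T `` {x} = {y. x \<in> D \<and> y \<in> D \<and> T x y \<and> T y x}"
  unfolding pequiv_def by auto

lemma pe_class_eq:
  assumes refl: "\<And>b. b \<in> D \<Longrightarrow> T b b"
  and trans: "\<And>a b c. a\<in>D \<Longrightarrow> b\<in>D \<Longrightarrow> c\<in>D \<Longrightarrow> T a b \<Longrightarrow> T b c \<Longrightarrow> T a c"
  and "x \<in> D" "y \<in> D"
  shows "pequiv D T `` {x} = pequiv D T `` {y} \<longleftrightarrow> T x y \<and> T y x"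
proof
  assume "pequiv D T `` {x} = pequiv D T `` {y}"
  moreover have "y \<in> pequiv D T `` {y}" using refl assms(4) unfolding pe_class by simp
  ultimately show "T x y \<and> T y x" unfolding pe_class by auto
next
  assume h: "T x y \<and> T y x"
  have 1: "T y z \<and> T z y" if "z \<in> D" "T x z" "T z x" for z
  proof -
    have "T y z" using trans[of y x z] assms(3,4) that h by blast
    moreover have "T z y" using trans[of z x y] assms(3,4) that h by blast
    ultimately show ?thesis by blast
  qed
  have 2: "T x z \<and> T z x" if "z \<in> D" "T y z" "T z y" for z
  proof -
    have "T x z" using trans[of x y z] assms(3,4) that h by blast
    moreover have "T z x" using trans[of z y x] assms(3,4) that h by blast
    ultimately show ?thesis by blast
  qed
  show "pequiv D T `` {x} = pequiv D T `` {y}" unfolding pe_class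
    using assms(3,4) 1 2 by blast
qed

lemma pe_cls_le:
  assumes refl: "\<And>b. b \<in> D \<Longrightarrow> T b b"
  and trans: "\<And>a b c. a\<in>D \<Longrightarrow> b\<in>D \<Longrightarrow> c\<in>D \<Longrightarrow> T a b \<Longrightarrow> T b c \<Longrightarrow> T a c"
  and "x \<in> D" "y \<in> D"
  shows "cls_le T (pequiv D T `` {x}) (pequiv D T `` {y}) \<longleftrightarrow> T x y"
proof
  assume "cls_le T (pequiv D T `` {x}) (pequiv D T `` {y})"
  then obtain x' y' where "x' \<in> D" "y' \<in> D" "T x x'" "T x' y'" "T y' y"
    unfolding cls_le_def pe_class by auto
  then have "T x y'" using trans[of x x' y'] assms(3) by simp
  then show "T x y" using trans[of x y' y] assms(3,4) \<open>T y' y\<close> \<open>y' \<in> D\<close> by simp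
next
  assume "T x y" then show "cls_le T (pequiv D T `` {x}) (pequiv D T `` {y})"
    unfolding cls_le_def pe_class using refl assms(3,4) by blast
qed

lemma iso_lemma:
  assumes Srefl: "\<And>b. b \<in> B \<Longrightarrow> S b b"
  and Strans: "\<And>a b c. a\<in>B \<Longrightarrow> b\<in>B \<Longrightarrow> c\<in>B \<Longrightarrow> S a b \<Longrightarrow> S b c \<Longrightarrow> S a c"
  and FB: "\<And>x. x\<in>A \<Longrightarrow> F x \<in> B"
  and emb: "\<And>x y. x\<in>A \<Longrightarrow> y\<in>A \<Longrightarrow> R x y \<longleftrightarrow> S (F x) (F y)"
  and sur: "\<And>b. b\<in>B \<Longrightarrow> \<exists>x\<in>A. S b (F x) \<and> S (F x) b"
  shows "posetal_reflections_iso A R B S"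
proof -
  have Rrefl: "\<And>b. b \<in> A \<Longrightarrow> R b b" using emb Srefl[OF FB] by blast
  have Rtrans: "\<And>a b c. a\<in>A \<Longrightarrow> b\<in>A \<Longrightarrow> c\<in>A \<Longrightarrow> R a b \<Longrightarrow> R b c \<Longrightarrow> R a c"
  proof -
    fix a b c assume h: "a\<in>A" "b\<in>A" "c\<in>A" "R a b" "R b c"
    then have "S (F a) (F b)" "S (F b) (F c)" using emb by auto
    then have "S (F a) (F c)" using Strans[OF FB[OF h(1)] FB[OF h(2)] FB[OF h(3)]] by blast
    then show "R a c" using emb h by auto
  qed
  have eqB: "pequiv B S``{x} = pequiv B S``{y} \<longleftrightarrow> S x y \<and> S y x" if "x\<in>B" "y\<in>B" for x y
    by (rule pe_class_eq) (rule Srefl Strans that; assumption)+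
  have eqA: "pequiv A R``{x} = pequiv A R``{y} \<longleftrightarrow> R x y \<and> R y x" if "x\<in>A" "y\<in>A" for x y
    by (rule pe_class_eq) (rule Rrefl Rtrans that; assumption)+
  have leB: "cls_le S (pequiv B S``{x}) (pequiv B S``{y}) \<longleftrightarrow> S x y" if "x\<in>B" "y\<in>B" for x y
    by (rule pe_cls_le) (rule Srefl Strans that; assumption)+
  have leA: "cls_le R (pequiv A R``{x}) (pequiv A R``{y}) \<longleftrightarrow> R x y" if "x\<in>A" "y\<in>A" for x y
    by (rule pe_cls_le) (rule Rrefl Rtrans that; assumption)+
  define f where "f a = pequiv B S `` (F ` a)" for a
  have fcl: "f (pequiv A R `` {x}) = pequiv B S `` {F x}" if "x \<in> A" for x
  proof
    show "f (pequiv A R `` {x}) \<subseteq> pequiv B S `` {F x}"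
    proof
      fix z assume "z \<in> f (pequiv A R `` {x})"
      then obtain y where y: "y \<in> A" "R x y" "R y x" "(F y, z) \<in> pequiv B S"
        unfolding f_def pe_class by auto
      then have "z \<in> B" "S (F y) z" "S z (F y)" "S (F x) (F y)" "S (F y) (F x)"
        using emb that unfolding pequiv_def by auto
      moreover note fx = FB[OF that] and fy = FB[OF y(1)]
      ultimately have "S (F x) z" "S z (F x)"
        using Strans[OF fx fy \<open>z \<in> B\<close>] Strans[OF \<open>z \<in> B\<close> fy fx] by blast+
      then show "z \<in> pequiv B S `` {F x}" unfolding pe_class
        using fx \<open>z \<in> B\<close> by blast
    qed
    show "pequiv B S `` {F x} \<subseteq> f (pequiv A R `` {x})"
    proof
      fix z assume "z \<in> pequiv B S `` {F x}"
      moreover have "x \<in> pequiv A R `` {x}" unfolding pe_class using that Rrefl[OF that] by simp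
      ultimately show "z \<in> f (pequiv A R `` {x})" unfolding f_def by blast
    qed
  qed
  have "bij_betw f (A // pequiv A R) (B // pequiv B S)"
  proof (rule bij_betw_imageI)
    show "inj_on f (A // pequiv A R)"
    proof (rule inj_onI)
      fix a b assume "a \<in> A // pequiv A R" "b \<in> A // pequiv A R" "f a = f b"
      then obtain x y where xy: "x \<in> A" "y \<in> A" "a = pequiv A R `` {x}" "b = pequiv A R `` {y}"
        "pequiv B S `` {F x} = pequiv B S `` {F y}"
        by (auto elim!: quotientE simp: fcl)
      then have "S (F x) (F y) \<and> S (F y) (F x)"
        using eqB FB by blast
      then have "R x y \<and> R y x" using emb xy by blast
      then show "a = b" using xy eqA by blast
    qed
    show "f ` (A // pequiv A R) = B // pequiv B S"
    proof
      show "f ` (A // pequiv A R) \<subseteq> B // pequiv B S"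
        by (auto elim!: quotientE simp: fcl FB quotientI)
      show "B // pequiv B S \<subseteq> f ` (A // pequiv A R)"
      proof
        fix c assume "c \<in> B // pequiv B S"
        then obtain b where b: "b \<in> B" "c = pequiv B S `` {b}" by (auto elim!: quotientE)
        then obtain x where x: "x \<in> A" "S b (F x)" "S (F x) b" using sur by blast
        then have "c = f (pequiv A R `` {x})"
          using b fcl eqB FB by auto
        then show "c \<in> f ` (A // pequiv A R)" using x by (auto intro: quotientI)
      qed
    qed
  qed
  moreover have "\<forall>a\<in>A // pequiv A R. \<forall>b\<in>A // pequiv A R. cls_le R a b \<longleftrightarrow> cls_le S (f a) (f b)"
  proof (intro ballI)
    fix a b assume "a \<in> A // pequiv A R" "b \<in> A // pequiv A R"
    then obtain x y where xy: "x \<in> A" "y \<in> A" "a = pequiv A R `` {x}" "b = pequiv A R `` {y}"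
      by (auto elim!: quotientE)
    show "cls_le R a b \<longleftrightarrow> cls_le S (f a) (f b)"
      using xy fcl leA leB FB emb
      by simp
  qed
  ultimately show ?thesis unfolding posetal_reflections_iso_def by blast
qed



lemma subst_subst: "subst \<theta> (subst \<sigma> t) = subst (\<lambda>v. subst \<theta> (\<sigma> v)) t"
  by (induction t) auto
lemma subst_cong: "(\<And>v. v \<in> vars t \<Longrightarrow> \<sigma> v = \<tau> v) \<Longrightarrow> subst \<sigma> t = subst \<tau> t"
  by (induction t) auto
lemma subst_Var: "subst Var t = t"
  by (induction t) (auto simp: map_idI)
lemma vars_subst: "vars (subst \<sigma> t) = (\<Union>v\<in>vars t. vars (\<sigma> v))"
  by (induction t) auto
lemma finite_vars: "finite (vars t)"
  by (induction t) auto
lemma wf_subst: "wf_trm ar t \<Longrightarrow> (\<And>v. v \<in> vars t \<Longrightarrow> wf_trm ar (\<sigma> v)) \<Longrightarrow> wf_trm ar (subst \<sigma> t)"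
  by (induction t) auto

lemma eqE_wf:
  assumes "\<forall>(l, r)\<in>E. wf_trm ar l \<and> wf_trm ar r"
  shows "eqE ar E s t \<Longrightarrow> wf_trm ar s \<and> wf_trm ar t"
proof (induction rule: eqE.induct)
  case (ax l r \<sigma>) then show ?case using assms by (auto intro!: wf_subst)
next
  case (cong ss f ts)
  then show ?case by (auto simp: list_all2_conv_all_nth in_set_conv_nth dest: list_all2_lengthD)
qed auto

lemma eqE_subst:
  assumes "\<forall>(l, r)\<in>E. wf_trm ar l \<and> wf_trm ar r" and th: "\<And>v. wf_trm ar (\<theta> v)"
  shows "eqE ar E s t \<Longrightarrow> eqE ar E (subst \<theta> s) (subst \<theta> t)"
proof (induction rule: eqE.induct)
  case (refl t) then show ?case using th by (auto intro!: eqE.refl wf_subst)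
next
  case (sym s t) then show ?case by (blast intro: eqE.sym)
next
  case (trans s t u) then show ?case by (blast intro: eqE.trans)
next
  case (ax l r \<sigma>)
  have "eqE ar E (subst (\<lambda>v. subst \<theta> (\<sigma> v)) l) (subst (\<lambda>v. subst \<theta> (\<sigma> v)) r)"
    by (rule eqE.ax) (use ax th in \<open>auto intro!: wf_subst\<close>)
  then show ?case by (simp add: subst_subst)
next
  case (cong ss f ts)
  show ?case using cong by (auto intro!: eqE.cong simp: list_all2_map1 list_all2_map2 elim: list_all2_mono)
qed

lemma eqE_subst2:
  "wf_trm ar t \<Longrightarrow> (\<And>v. v \<in> vars t \<Longrightarrow> eqE ar E (\<sigma> v) (\<tau> v)) \<Longrightarrow> eqE ar E (subst \<sigma> t) (subst \<tau> t)"
proof (induction t)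
  case (Var x) then show ?case by simp
next
  case (Fn f ts)
  show ?case using Fn
    by (simp add: list_all2_map1 list_all2_map2, intro eqE.cong list.rel_refl_strong) (auto simp: list_all2_map1 list_all2_map2 intro!: list.rel_refl_strong)
qed




locale eqth =
  fixes ar :: "'f \<Rightarrow> nat" and E :: "(('f, 'v) trm \<times> ('f, 'v) trm) set"
  assumes EW: "\<forall>(l, r)\<in>E. wf_trm ar l \<and> wf_trm ar r"
begin

abbreviation F where "F Y \<equiv> free_alg ar E Y"
abbreviation car where "car Y \<equiv> acarrier (free_alg ar E Y)"

lemma eqE_wfD: "eqE ar E s t \<Longrightarrow> wf_trm ar s \<and> wf_trm ar t"
  using eqE_wf[OF EW] .

lemma mem_tcls: "u \<in> tcls ar E Y t \<longleftrightarrow> wf_trm ar u \<and> vars u \<subseteq> Y \<and> eqE ar E t u"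
  unfolding tcls_def by simp

lemma tcls_self: "wf_trm ar t \<Longrightarrow> vars t \<subseteq> Y \<Longrightarrow> t \<in> tcls ar E Y t"
  unfolding tcls_def by (auto intro: eqE.refl)

lemma tcls_eq: assumes st: "eqE ar E s t" shows "tcls ar E Y s = tcls ar E Y t"
proof -
  have "eqE ar E s u \<longleftrightarrow> eqE ar E t u" for u
    using st by (metis eqE.sym eqE.trans)
  then show ?thesis unfolding tcls_def by simp
qed

lemma tcls_eqE: "tcls ar E Y s = tcls ar E Y t \<Longrightarrow> wf_trm ar t \<Longrightarrow> vars t \<subseteq> Y \<Longrightarrow> eqE ar E s t"
  using tcls_self[of t Y] unfolding tcls_def by auto

lemma car_iff: "a \<in> car Y \<longleftrightarrow> (\<exists>t. wf_trm ar t \<and> vars t \<subseteq> Y \<and> a = tcls ar E Y t)"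
  unfolding free_alg_def by auto

lemma tcls_car: "wf_trm ar t \<Longrightarrow> vars t \<subseteq> Y \<Longrightarrow> tcls ar E Y t \<in> car Y"
  unfolding car_iff by auto

lemma car_tcls: "a \<in> car Y \<Longrightarrow> u \<in> a \<Longrightarrow> a = tcls ar E Y u"
  unfolding car_iff by (auto simp: mem_tcls intro!: tcls_eq)

lemma car_some: "a \<in> car Y \<Longrightarrow> (SOME u. u \<in> a) \<in> a"
  unfolding car_iff by (auto intro: someI tcls_self)

lemma car_some2: assumes "a \<in> car Y"
  shows "wf_trm ar (SOME u. u \<in> a)" "vars (SOME u. u \<in> a) \<subseteq> Y" "a = tcls ar E Y (SOME u. u \<in> a)"
proof -
  have m: "(SOME u. u \<in> a) \<in> a" using car_some[OF assms] .
  then show "a = tcls ar E Y (SOME u. u \<in> a)" using car_tcls[OF assms] by blast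
  then show "wf_trm ar (SOME u. u \<in> a)" "vars (SOME u. u \<in> a) \<subseteq> Y"
    using m by (metis mem_tcls)+
qed

lemma some_tcls: "wf_trm ar t \<Longrightarrow> vars t \<subseteq> Y \<Longrightarrow> eqE ar E t (SOME u. u \<in> tcls ar E Y t)"
  using car_some[OF tcls_car, of t Y] by (simp add: mem_tcls)

lemma aop_F: "aop (F Y) f as = tcls ar E Y (Fn f (map (\<lambda>a. SOME t. t \<in> a) as))"
  unfolding free_alg_def by simp

lemma aop_tcls:
  assumes "length ts = ar f" "\<forall>t\<in>set ts. wf_trm ar t \<and> vars t \<subseteq> Y"
  shows "aop (F Y) f (map (tcls ar E Y) ts) = tcls ar E Y (Fn f ts)"
proof -
  have "eqE ar E (Fn f ts) (Fn f (map (\<lambda>a. SOME t. t \<in> a) (map (tcls ar E Y) ts)))"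
    using assms by (auto intro!: eqE.cong list.rel_refl_strong simp: list_all2_map2 some_tcls)
  then show ?thesis unfolding aop_F by (metis tcls_eq)
qed

lemma aop_car:
  assumes "length as = ar f" "set as \<subseteq> car Y"
  shows "aop (F Y) f as \<in> car Y"
proof -
  have "\<forall>a\<in>set as. wf_trm ar (SOME u. u \<in> a) \<and> vars (SOME u. u \<in> a) \<subseteq> Y"
    using assms car_some2 by blast
  then show ?thesis unfolding aop_F using assms by (intro tcls_car) auto
qed

definition shom where
  "shom W \<theta> = (\<lambda>a. tcls ar E W (subst \<theta> (SOME t. t \<in> a)))"

lemma shom_tcls:
  assumes th: "\<And>v. wf_trm ar (\<theta> v)" and "wf_trm ar t" "vars t \<subseteq> Y"
  shows "shom W \<theta> (tcls ar E Y t) = tcls ar E W (subst \<theta> t)"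
  unfolding shom_def
  by (rule tcls_eq, rule eqE.sym, rule eqE_subst[OF EW th], rule some_tcls) (use assms in auto)

lemma shom_hom:
  assumes th: "\<And>v. wf_trm ar (\<theta> v)" and thv: "\<And>v. v \<in> Y \<Longrightarrow> vars (\<theta> v) \<subseteq> W"
  shows "hom ar (F Y) (F W) (shom W \<theta>)"
  unfolding hom_def
proof (intro conjI allI impI ballI)
  fix a assume "a \<in> car Y"
  then have "wf_trm ar (SOME u. u \<in> a)" "vars (SOME u. u \<in> a) \<subseteq> Y" using car_some2(1,2) by auto
  then show "shom W \<theta> a \<in> car W" unfolding shom_def using th thv
    by (intro tcls_car wf_subst) (auto simp: vars_subst)
next
  fix f as assume len: "length as = ar f" and sub: "set as \<subseteq> car Y"
  define ts where "ts = map (\<lambda>a. SOME t. t \<in> a) as"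
  have "\<forall>a\<in>set as. wf_trm ar (SOME u. u \<in> a) \<and> vars (SOME u. u \<in> a) \<subseteq> Y"
    using sub car_some2 by blast
  then have ts: "\<forall>t\<in>set ts. wf_trm ar t \<and> vars t \<subseteq> Y" unfolding ts_def by auto
  have as: "as = map (tcls ar E Y) ts" unfolding ts_def map_map
  proof (rule map_idI[symmetric])
    fix a assume "a \<in> set as"
    then have "a \<in> car Y" using sub by blast
    from car_some2(3)[OF this] show "(tcls ar E Y \<circ> (\<lambda>a. SOME t. t \<in> a)) a = a" by simp
  qed
  have lt: "length ts = ar f" using len ts_def by simp
  have wfs: "\<forall>t\<in>set ts. wf_trm ar (subst \<theta> t) \<and> vars (subst \<theta> t) \<subseteq> W"
  proof
    fix t assume t: "t \<in> set ts"
    then have vt: "vars t \<subseteq> Y" "wf_trm ar t" using ts by auto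
    have "vars (subst \<theta> t) \<subseteq> W" unfolding vars_subst using vt th thv by blast
    then show "wf_trm ar (subst \<theta> t) \<and> vars (subst \<theta> t) \<subseteq> W"
      using vt th thv by (auto intro!: wf_subst)
  qed
  have "shom W \<theta> (aop (F Y) f as) = tcls ar E W (subst \<theta> (Fn f ts))"
    unfolding as by (subst aop_tcls[OF lt ts], rule shom_tcls) (use th lt ts in auto)
  also have "\<dots> = aop (F W) f (map (tcls ar E W) (map (subst \<theta>) ts))"
    using aop_tcls[of "map (subst \<theta>) ts" f W] lt wfs by simp
  also have "map (tcls ar E W) (map (subst \<theta>) ts) = map (shom W \<theta>) as"
    unfolding as using ts by (auto simp: shom_tcls[OF th])
  finally show "shom W \<theta> (aop (F Y) f as) = aop (F W) f (map (shom W \<theta>) as)" .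
qed

definition hsub where
  "hsub Y k = (\<lambda>v. if v \<in> Y then (SOME u. u \<in> k (tcls ar E Y (Var v))) else Var v)"

lemma hom_car: "hom ar A B k \<Longrightarrow> a \<in> acarrier A \<Longrightarrow> k a \<in> acarrier B"
  unfolding hom_def by blast

lemma hsub_in:
  assumes "hom ar (F Y) (F W) k" "v \<in> Y"
  shows "vars (hsub Y k v) \<subseteq> W" "k (tcls ar E Y (Var v)) = tcls ar E W (hsub Y k v)"
proof -
  have kc: "k (tcls ar E Y (Var v)) \<in> car W"
    using assms by (intro hom_car[OF assms(1)] tcls_car) auto
  have h: "hsub Y k v = (SOME u. u \<in> k (tcls ar E Y (Var v)))" unfolding hsub_def using assms(2) by simp
  show "vars (hsub Y k v) \<subseteq> W" unfolding h by (rule car_some2(2)[OF kc])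
  show "k (tcls ar E Y (Var v)) = tcls ar E W (hsub Y k v)" unfolding h by (rule car_some2(3)[OF kc])
qed

lemma hsub_wf:
  assumes "hom ar (F Y) (F W) k"
  shows "wf_trm ar (hsub Y k v)"
proof (cases "v \<in> Y")
  case True
  have kc: "k (tcls ar E Y (Var v)) \<in> car W"
    using assms True by (intro hom_car[OF assms(1)] tcls_car) auto
  show ?thesis unfolding hsub_def using True car_some2(1)[OF kc] by simp
qed (simp add: hsub_def)

lemmas hsub_props = hsub_wf hsub_in

lemma hom_subst:
  assumes k: "hom ar (F Y) (F W) k"
  shows "wf_trm ar t \<Longrightarrow> vars t \<subseteq> Y \<Longrightarrow> k (tcls ar E Y t) = tcls ar E W (subst (hsub Y k) t)"
proof (induction t)
  case (Var x) then show ?case using hsub_props[OF k] by simp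
next
  case (Fn f ts)
  have ts: "\<forall>t\<in>set ts. wf_trm ar t \<and> vars t \<subseteq> Y" "length ts = ar f" using Fn.prems by auto
  have ts': "\<forall>t\<in>set ts. wf_trm ar (subst (hsub Y k) t) \<and> vars (subst (hsub Y k) t) \<subseteq> W"
  proof
    fix t assume t: "t \<in> set ts"
    then have vt: "vars t \<subseteq> Y" "wf_trm ar t" using ts by auto
    have "vars (subst (hsub Y k) t) \<subseteq> W" unfolding vars_subst using vt hsub_props[OF k] by blast
    then show "wf_trm ar (subst (hsub Y k) t) \<and> vars (subst (hsub Y k) t) \<subseteq> W"
      using vt hsub_props[OF k] by (auto intro!: wf_subst)
  qed
  have "k (tcls ar E Y (Fn f ts)) = k (aop (F Y) f (map (tcls ar E Y) ts))"
    using aop_tcls[OF ts(2) ts(1)] by simp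
  also have "\<dots> = aop (F W) f (map k (map (tcls ar E Y) ts))"
  proof -
    have sub: "set (map (tcls ar E Y) ts) \<subseteq> car Y" using ts by (auto intro!: tcls_car)
    then show ?thesis using k ts(2) unfolding hom_def by (metis length_map)
  qed
  also have "map k (map (tcls ar E Y) ts) = map (tcls ar E W) (map (subst (hsub Y k)) ts)"
    using Fn.IH ts by auto
  also have "aop (F W) f \<dots> = tcls ar E W (Fn f (map (subst (hsub Y k)) ts))"
    using aop_tcls[of "map (subst (hsub Y k)) ts" f W] ts ts' by simp
  finally show ?case by simp
qed

end



lemma cong_equiv: "congruence ar A R \<Longrightarrow> equiv (acarrier A) R"
  unfolding congruence_def by blast

lemma cong_ops: "congruence ar A R \<Longrightarrow> length as = ar f \<Longrightarrow> list_all2 (\<lambda>a b. (a, b) \<in> R) as bs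
   \<Longrightarrow> (aop A f as, aop A f bs) \<in> R"
  unfolding congruence_def by blast

lemma cong_gen_props:
  assumes G: "G \<subseteq> acarrier A \<times> acarrier A"
  and clo: "\<And>f as. length as = ar f \<Longrightarrow> set as \<subseteq> acarrier A \<Longrightarrow> aop A f as \<in> acarrier A"
  shows "congruence ar A (cong_gen ar A G)" "G \<subseteq> cong_gen ar A G"
    "cong_gen ar A G \<subseteq> acarrier A \<times> acarrier A"
    "congruence ar A R \<Longrightarrow> G \<subseteq> R \<Longrightarrow> cong_gen ar A G \<subseteq> R"
proof -
  let ?U = "acarrier A \<times> acarrier A"
  let ?Fam = "{R. congruence ar A R \<and> G \<subseteq> R}"
  have l2: "set as \<subseteq> acarrier A \<and> set bs \<subseteq> acarrier A"
    if "list_all2 (\<lambda>a b. (a, b) \<in> ?U) as bs" for as bs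
    using that by (induction rule: list_all2_induct) auto
  have cU: "congruence ar A ?U"
    unfolding congruence_def
  proof (intro conjI allI impI)
    show "equiv (acarrier A) ?U" by (rule equivI) (auto simp: refl_on_def sym_def trans_def)
  next
    fix f as bs assume a: "length as = ar f" "list_all2 (\<lambda>a b. (a, b) \<in> ?U) as bs"
    then have "length bs = ar f" by (simp add: list_all2_lengthD)
    then show "(aop A f as, aop A f bs) \<in> ?U" using l2[OF a(2)] clo a(1) by blast
  qed
  have UF: "?U \<in> ?Fam" using cU G by blast
  have cg: "cong_gen ar A G = \<Inter>?Fam" unfolding cong_gen_def ..
  show sub: "cong_gen ar A G \<subseteq> ?U" unfolding cg using UF by (rule Inter_lower)
  show "G \<subseteq> cong_gen ar A G" unfolding cg by (rule Inter_greatest) blast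
  show "congruence ar A R \<Longrightarrow> G \<subseteq> R \<Longrightarrow> cong_gen ar A G \<subseteq> R" unfolding cg
    by (rule Inter_lower) blast
  show "congruence ar A (cong_gen ar A G)"
    unfolding congruence_def
  proof (intro conjI allI impI)
    show "equiv (acarrier A) (cong_gen ar A G)"
    proof (rule equivI)
      show "cong_gen ar A G \<subseteq> ?U" by (rule sub)
      show "refl_on (acarrier A) (cong_gen ar A G)"
      proof (rule refl_onI)
        fix x assume x: "x \<in> acarrier A"
        show "(x, x) \<in> cong_gen ar A G" unfolding cg
        proof (rule InterI)
          fix R assume "R \<in> ?Fam"
          then have "equiv (acarrier A) R" using cong_equiv by blast
          then show "(x, x) \<in> R" using x by (auto simp: equiv_def refl_on_def)
        qed
      qed
      show "sym (cong_gen ar A G)"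
      proof (rule symI)
        fix x y assume xy: "(x, y) \<in> cong_gen ar A G"
        show "(y, x) \<in> cong_gen ar A G" unfolding cg
        proof (rule InterI)
          fix R assume R: "R \<in> ?Fam"
          then have "equiv (acarrier A) R" using cong_equiv by blast
          moreover have "(x, y) \<in> R" using xy R unfolding cg by blast
          ultimately show "(y, x) \<in> R" by (auto simp: equiv_def dest: symD)
        qed
      qed
      show "trans (cong_gen ar A G)"
      proof (rule transI)
        fix x y z assume xy: "(x, y) \<in> cong_gen ar A G" and yz: "(y, z) \<in> cong_gen ar A G"
        show "(x, z) \<in> cong_gen ar A G" unfolding cg
        proof (rule InterI)
          fix R assume R: "R \<in> ?Fam"
          then have "equiv (acarrier A) R" using cong_equiv by blast
          moreover have "(x, y) \<in> R" "(y, z) \<in> R" using xy yz R unfolding cg by blast+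
          ultimately show "(x, z) \<in> R" by (auto simp: equiv_def dest: transD)
        qed
      qed
    qed
  next
    fix f as bs assume len: "length as = ar f" and l: "list_all2 (\<lambda>a b. (a, b) \<in> cong_gen ar A G) as bs"
    show "(aop A f as, aop A f bs) \<in> cong_gen ar A G"
      unfolding cg
    proof (rule InterI)
      fix R assume R: "R \<in> ?Fam"
      have "list_all2 (\<lambda>a b. (a, b) \<in> R) as bs"
        using l by (rule list_all2_mono) (use R in \<open>auto simp: cg\<close>)
      moreover from R have "congruence ar A R" by blast
      ultimately show "(aop A f as, aop A f bs) \<in> R" using len cong_ops by metis
    qed
  qed
qed

locale setting = eqth ar E for ar :: "'f \<Rightarrow> nat" and E :: "(('f, 'v) trm \<times> ('f, 'v) trm) set" +
  fixes X C :: "'v set" and P :: "(('f, 'v) trm \<times> ('f, 'v) trm) list"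
  assumes const: "\<exists>f. ar f = 0"
  and finX: "finite X" and finC: "finite C" and disj: "X \<inter> C = {}"
  and Pwf: "\<forall>(s, t)\<in>set P. wf_trm ar s \<and> wf_trm ar t \<and> vars s \<subseteq> X \<union> C \<and> vars t \<subseteq> X \<union> C"
begin

abbreviation "th \<equiv> theta_P ar E X C P"
abbreviation "gens \<equiv> {(tcls ar E (X \<union> C) s, tcls ar E (X \<union> C) t) | s t. (s, t) \<in> set P}"

lemma gens_car: "gens \<subseteq> car (X \<union> C) \<times> car (X \<union> C)"
  using Pwf by (auto intro!: tcls_car)

lemma th_cong: "congruence ar (F (X \<union> C)) th"
  unfolding theta_P_def by (rule cong_gen_props(1)[OF gens_car aop_car])
lemma th_gens: "gens \<subseteq> th"
  unfolding theta_P_def by (rule cong_gen_props(2)[OF gens_car aop_car])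
lemma th_sub: "th \<subseteq> car (X \<union> C) \<times> car (X \<union> C)"
  unfolding theta_P_def by (rule cong_gen_props(3)[OF gens_car aop_car])
lemma th_least: "congruence ar (F (X \<union> C)) R \<Longrightarrow> gens \<subseteq> R \<Longrightarrow> th \<subseteq> R"
  unfolding theta_P_def by (rule cong_gen_props(4)[OF gens_car aop_car])
lemma th_equiv: "equiv (car (X \<union> C)) th" using th_cong unfolding congruence_def by blast

lemma plus_hom_eq: "plus_hom ar E X C Z \<sigma> = shom (Z \<union> C) (hsub X \<sigma>)"
  unfolding plus_hom_def shom_def hsub_def by (rule ext) simp

lemma hsub_notX: "v \<notin> X \<Longrightarrow> hsub X k v = Var v"
  unfolding hsub_def by simp

lemma hsub_vars_ZC:
  assumes "hom ar (F X) (F Z) \<sigma>" "v \<in> X \<union> C"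
  shows "vars (hsub X \<sigma> v) \<subseteq> Z \<union> C"
proof (cases "v \<in> X")
  case True then show ?thesis using hsub_props(2)[OF assms(1)] by blast
next
  case False then show ?thesis using assms(2) by (simp add: hsub_notX)
qed

lemma subst_hsub_props:
  assumes "hom ar (F X) (F Z) \<sigma>" "wf_trm ar t" "vars t \<subseteq> X \<union> C"
  shows "wf_trm ar (subst (hsub X \<sigma>) t)" "vars (subst (hsub X \<sigma>) t) \<subseteq> Z \<union> C"
proof -
  show "wf_trm ar (subst (hsub X \<sigma>) t)" using assms hsub_props(1)[OF assms(1)] by (auto intro: wf_subst)
  have "\<And>v. v \<in> vars t \<Longrightarrow> vars (hsub X \<sigma> v) \<subseteq> Z \<union> C"
    using hsub_vars_ZC[OF assms(1)] assms(3) by blast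
  then show "vars (subst (hsub X \<sigma>) t) \<subseteq> Z \<union> C" unfolding vars_subst by blast
qed

lemma M1:
  assumes "(Z, \<sigma>) \<in> U_alg ar E X C P"
  shows "hsub X \<sigma> \<in> U_sym ar E X C P"
proof -
  have A: "finite Z \<and> Z \<inter> C = {} \<and> hom ar (F X) (F Z) \<sigma> \<and> (\<exists>g. hom ar (alg_A ar E X C P) (F (Z \<union> C)) g \<and>
         (\<forall>a\<in>car (X \<union> C). g (quot_map th a) = plus_hom ar E X C Z \<sigma> a))"
    using assms unfolding U_alg_def by simp
  then have Z: "finite Z" "Z \<inter> C = {}" and hs: "hom ar (F X) (F Z) \<sigma>" by blast+
  from A obtain g where g: "\<And>a. a \<in> car (X \<union> C) \<Longrightarrow> g (quot_map th a) = shom (Z \<union> C) (hsub X \<sigma>) a"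
    unfolding plus_hom_eq by blast
  have ci: "C_invariant ar X C (hsub X \<sigma>)"
    unfolding C_invariant_def
  proof (intro conjI ballI impI)
    fix v show "wf_trm ar (hsub X \<sigma> v)" using hsub_props(1)[OF hs] .
  next
    fix c assume "c \<in> C" then have "c \<notin> X" using disj by blast
    then show "hsub X \<sigma> c = Var c" by (rule hsub_notX)
  next
    fix x assume "x \<in> X \<union> C" "x \<notin> C"
    then have "x \<in> X" by blast
    then have "vars (hsub X \<sigma> x) \<subseteq> Z" by (rule hsub_props(2)[OF hs])
    then show "vars (hsub X \<sigma> x) \<inter> C = {}" using Z(2) by blast
  qed
  have "eqE ar E (subst (hsub X \<sigma>) s) (subst (hsub X \<sigma>) t)" if st: "(s, t) \<in> set P" for s t
  proof -
    have w: "wf_trm ar s" "wf_trm ar t" "vars s \<subseteq> X \<union> C" "vars t \<subseteq> X \<union> C" using Pwf st by auto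
    have "(tcls ar E (X \<union> C) s, tcls ar E (X \<union> C) t) \<in> gens" using st by blast
    then have "(tcls ar E (X \<union> C) s, tcls ar E (X \<union> C) t) \<in> th" by (rule subsetD[OF th_gens])
    then have "quot_map th (tcls ar E (X \<union> C) s) = quot_map th (tcls ar E (X \<union> C) t)"
      unfolding quot_map_def by (rule equiv_class_eq[OF th_equiv])
    then have "shom (Z \<union> C) (hsub X \<sigma>) (tcls ar E (X \<union> C) s) = shom (Z \<union> C) (hsub X \<sigma>) (tcls ar E (X \<union> C) t)"
    proof -
      have cs: "tcls ar E (X \<union> C) s \<in> car (X \<union> C)" "tcls ar E (X \<union> C) t \<in> car (X \<union> C)"
        using w by (auto intro!: tcls_car)
      show ?thesis using g[OF cs(1)] g[OF cs(2)] \<open>quot_map th _ = quot_map th _\<close> by metis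
    qed
    moreover have "shom (Z \<union> C) (hsub X \<sigma>) (tcls ar E (X \<union> C) s) = tcls ar E (Z \<union> C) (subst (hsub X \<sigma>) s)"
      by (rule shom_tcls) (use w hsub_props(1)[OF hs] in auto)
    moreover have "shom (Z \<union> C) (hsub X \<sigma>) (tcls ar E (X \<union> C) t) = tcls ar E (Z \<union> C) (subst (hsub X \<sigma>) t)"
      by (rule shom_tcls) (use w hsub_props(1)[OF hs] in auto)
    ultimately have "tcls ar E (Z \<union> C) (subst (hsub X \<sigma>) s) = tcls ar E (Z \<union> C) (subst (hsub X \<sigma>) t)"
      by simp
    then show ?thesis by (rule tcls_eqE) (use subst_hsub_props[OF hs w(2,4)] in auto)
  qed
  then have "\<forall>(s, t)\<in>set P. eqE ar E (subst (hsub X \<sigma>) s) (subst (hsub X \<sigma>) t)" by blast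
  then show ?thesis using ci unfolding U_sym_def by blast
qed

end



context setting begin

lemma U_alg_D:
  assumes "(Z, \<sigma>) \<in> U_alg ar E X C P"
  shows "finite Z" "Z \<inter> C = {}" "hom ar (F X) (F Z) \<sigma>"
proof -
  have A: "finite Z \<and> Z \<inter> C = {} \<and> hom ar (F X) (F Z) \<sigma>"
    using assms unfolding U_alg_def by simp
  then show "finite Z" "Z \<inter> C = {}" "hom ar (F X) (F Z) \<sigma>" by blast+
qed

lemma U_sym_D:
  assumes "\<sigma> \<in> U_sym ar E X C P"
  shows "\<And>v. v \<in> X \<union> C \<Longrightarrow> wf_trm ar (\<sigma> v)" "\<And>c. c \<in> C \<Longrightarrow> \<sigma> c = Var c"
    "\<And>x. x \<in> X \<Longrightarrow> vars (\<sigma> x) \<inter> C = {}"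
    "\<And>s t. (s, t) \<in> set P \<Longrightarrow> eqE ar E (subst \<sigma> s) (subst \<sigma> t)"
proof -
  have ci: "C_invariant ar X C \<sigma>" and u: "\<forall>(s, t)\<in>set P. eqE ar E (subst \<sigma> s) (subst \<sigma> t)"
    using assms unfolding U_sym_def by auto
  show "\<And>v. v \<in> X \<union> C \<Longrightarrow> wf_trm ar (\<sigma> v)" "\<And>c. c \<in> C \<Longrightarrow> \<sigma> c = Var c"
    using ci unfolding C_invariant_def by blast+
  show "\<And>x. x \<in> X \<Longrightarrow> vars (\<sigma> x) \<inter> C = {}" using ci disj unfolding C_invariant_def by blast
  show "\<And>s t. (s, t) \<in> set P \<Longrightarrow> eqE ar E (subst \<sigma> s) (subst \<sigma> t)" using u by blast
qed

lemma sym_le_refl: "\<sigma> \<in> U_sym ar E X C P \<Longrightarrow> sym_le ar E X C \<sigma> \<sigma>"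
  unfolding sym_le_def
  by (rule exI[of _ Var]) (auto simp: subst_Var intro!: eqE.refl dest: U_sym_D(1))

lemma sym_le_trans:
  assumes "sym_le ar E X C a b" "sym_le ar E X C b c"
  shows "sym_le ar E X C a c"
proof -
  obtain t1 where t1: "\<And>v. wf_trm ar (t1 v)" "\<And>v. v \<in> X \<union> C \<Longrightarrow> eqE ar E (a v) (subst t1 (b v))"
    using assms(1) unfolding sym_le_def by blast
  obtain t2 where t2: "\<And>v. wf_trm ar (t2 v)" "\<And>v. v \<in> X \<union> C \<Longrightarrow> eqE ar E (b v) (subst t2 (c v))"
    using assms(2) unfolding sym_le_def by blast
  have w: "\<And>v. wf_trm ar (subst t1 (t2 v))" using t1(1) t2(1) by (blast intro: wf_subst)
  have "eqE ar E (a v) (subst (\<lambda>v. subst t1 (t2 v)) (c v))" if v: "v \<in> X \<union> C" for v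
  proof -
    have "eqE ar E (subst t1 (b v)) (subst t1 (subst t2 (c v)))"
      by (rule eqE_subst[OF EW t1(1) t2(2)[OF v]])
    then show ?thesis using t1(2)[OF v] by (simp add: subst_subst) (rule eqE.trans)
  qed
  then show ?thesis unfolding sym_le_def using w by (intro exI[of _ "\<lambda>v. subst t1 (t2 v)"]) blast
qed

lemma hsub_notin: "v \<notin> Y \<Longrightarrow> hsub Y k v = Var v"
  unfolding hsub_def by simp

lemma hom_op: "hom ar A B h \<Longrightarrow> length as = ar f \<Longrightarrow> set as \<subseteq> acarrier A \<Longrightarrow> h (aop A f as) = aop B f (map h as)"
  unfolding hom_def by blast

lemma subst_hsub_X:
  assumes "hom ar (F X) (F Z) \<sigma>" "wf_trm ar t" "vars t \<subseteq> X"
  shows "wf_trm ar (subst (hsub X \<sigma>) t)" "vars (subst (hsub X \<sigma>) t) \<subseteq> Z"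
proof -
  show "wf_trm ar (subst (hsub X \<sigma>) t)" using assms hsub_props(1)[OF assms(1)] by (auto intro: wf_subst)
  have "\<And>v. v \<in> vars t \<Longrightarrow> vars (hsub X \<sigma> v) \<subseteq> Z"
    using hsub_props(2)[OF assms(1)] assms(3) by blast
  then show "vars (subst (hsub X \<sigma>) t) \<subseteq> Z" unfolding vars_subst by blast
qed

lemma tclsX_car: "v \<in> X \<Longrightarrow> tcls ar E X (Var v) \<in> car X"
  by (rule tcls_car) auto

lemma M2:
  assumes a1: "(W, \<gamma>) \<in> U_alg ar E X C P" and a2: "(Z, \<sigma>) \<in> U_alg ar E X C P"
  shows "alg_le ar E X (W, \<gamma>) (Z, \<sigma>) \<longleftrightarrow> sym_le ar E X C (hsub X \<gamma>) (hsub X \<sigma>)"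
proof -
  have hg: "hom ar (F X) (F W) \<gamma>" and hs: "hom ar (F X) (F Z) \<sigma>" and ZC: "Z \<inter> C = {}" and WC: "W \<inter> C = {}"
    using U_alg_D[OF a1] U_alg_D[OF a2] by auto
  have al: "alg_le ar E X (W, \<gamma>) (Z, \<sigma>) \<longleftrightarrow> (\<exists>k. hom ar (F Z) (F W) k \<and> (\<forall>a\<in>car X. k (\<sigma> a) = \<gamma> a))"
    unfolding alg_le_def by simp
  show ?thesis
  proof
    assume "alg_le ar E X (W, \<gamma>) (Z, \<sigma>)"
    then obtain k where k: "hom ar (F Z) (F W) k" and kk: "\<And>a. a \<in> car X \<Longrightarrow> k (\<sigma> a) = \<gamma> a"
      unfolding al by blast
    have "eqE ar E (hsub X \<gamma> v) (subst (hsub Z k) (hsub X \<sigma> v))" if v: "v \<in> X \<union> C" for v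
    proof (cases "v \<in> X")
      case True
      have w1: "wf_trm ar (hsub X \<sigma> v)" "vars (hsub X \<sigma> v) \<subseteq> Z"
        using hsub_props(1)[OF hs] hsub_props(2)[OF hs True] by auto
      have e1: "\<sigma> (tcls ar E X (Var v)) = tcls ar E Z (hsub X \<sigma> v)" by (rule hsub_props(3)[OF hs True])
      have e2: "\<gamma> (tcls ar E X (Var v)) = tcls ar E W (hsub X \<gamma> v)" by (rule hsub_props(3)[OF hg True])
      have e3: "k (tcls ar E Z (hsub X \<sigma> v)) = tcls ar E W (subst (hsub Z k) (hsub X \<sigma> v))"
        by (rule hom_subst[OF k w1])
      have "tcls ar E W (hsub X \<gamma> v) = tcls ar E W (subst (hsub Z k) (hsub X \<sigma> v))"
        using kk[OF tclsX_car[OF True]] e1 e2 e3 by simp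
      moreover have "wf_trm ar (subst (hsub Z k) (hsub X \<sigma> v))"
        using w1 hsub_props(1)[OF k] by (auto intro: wf_subst)
      moreover have "vars (subst (hsub Z k) (hsub X \<sigma> v)) \<subseteq> W"
      proof -
        have "\<And>u. u \<in> vars (hsub X \<sigma> v) \<Longrightarrow> vars (hsub Z k u) \<subseteq> W"
          using hsub_props(2)[OF k] w1(2) by blast
        then show ?thesis unfolding vars_subst by blast
      qed
      ultimately show ?thesis by (rule tcls_eqE)
    next
      case False
      then have "v \<in> C" "v \<notin> Z" using v ZC by auto
      then have "hsub Z k v = Var v" "hsub X \<gamma> v = Var v" "hsub X \<sigma> v = Var v"
        using False \<open>v \<notin> Z\<close> by (simp_all add: hsub_notin)
      then show ?thesis by (simp add: eqE.refl)
    qed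
    then show "sym_le ar E X C (hsub X \<gamma>) (hsub X \<sigma>)"
      unfolding sym_le_def using hsub_props(1)[OF k] by (intro exI[of _ "hsub Z k"]) blast
  next
    assume "sym_le ar E X C (hsub X \<gamma>) (hsub X \<sigma>)"
    then obtain \<theta> where th: "\<And>v. wf_trm ar (\<theta> v)"
      and h: "\<And>v. v \<in> X \<union> C \<Longrightarrow> eqE ar E (hsub X \<gamma> v) (subst \<theta> (hsub X \<sigma> v))"
      unfolding sym_le_def by blast
    obtain c0 where c0: "ar c0 = 0" using const by blast
    define \<rho> where "\<rho> u = (if u \<in> W then Var u else (Fn c0 [] :: ('f, 'v) trm))" for u
    define \<theta>2 where "\<theta>2 v = subst \<rho> (\<theta> v)" for v
    have wr: "\<And>u. wf_trm ar (\<rho> u)" unfolding \<rho>_def using c0 by simp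
    have vr: "\<And>u. vars (\<rho> u) \<subseteq> W" unfolding \<rho>_def by simp
    have w2: "\<And>v. wf_trm ar (\<theta>2 v)" unfolding \<theta>2_def by (rule wf_subst) (use th wr in auto)
    have v2: "\<And>v. vars (\<theta>2 v) \<subseteq> W" unfolding \<theta>2_def vars_subst using vr by blast
    have k: "hom ar (F Z) (F W) (shom W \<theta>2)" by (rule shom_hom[OF w2 v2])
    have "shom W \<theta>2 (\<sigma> a) = \<gamma> a" if a: "a \<in> car X" for a
    proof -
      define t where "t = (SOME u. u \<in> a)"
      have t: "wf_trm ar t" "vars t \<subseteq> X" "a = tcls ar E X t" unfolding t_def
        by (rule car_some2(1)[OF a], rule car_some2(2)[OF a], rule car_some2(3)[OF a])
      have s1: "\<sigma> a = tcls ar E Z (subst (hsub X \<sigma>) t)" using hom_subst[OF hs t(1,2)] t(3) by simp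
      have s2: "\<gamma> a = tcls ar E W (subst (hsub X \<gamma>) t)" using hom_subst[OF hg t(1,2)] t(3) by simp
      have s3: "shom W \<theta>2 (tcls ar E Z (subst (hsub X \<sigma>) t)) = tcls ar E W (subst \<theta>2 (subst (hsub X \<sigma>) t))"
        by (rule shom_tcls[OF w2 subst_hsub_X[OF hs t(1,2)]])
      have pt: "eqE ar E (subst \<theta>2 (hsub X \<sigma> v)) (hsub X \<gamma> v)" if v: "v \<in> vars t" for v
      proof -
        have vX: "v \<in> X" using v t(2) by blast
        have "eqE ar E (subst \<rho> (hsub X \<gamma> v)) (subst \<rho> (subst \<theta> (hsub X \<sigma> v)))"
          by (rule eqE_subst[OF EW wr h]) (use vX in blast)
        moreover have "subst \<rho> (hsub X \<gamma> v) = hsub X \<gamma> v"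
        proof -
          have "subst \<rho> (hsub X \<gamma> v) = subst Var (hsub X \<gamma> v)"
            by (rule subst_cong) (use hsub_props(2)[OF hg vX] in \<open>auto simp: \<rho>_def\<close>)
          then show ?thesis by (simp add: subst_Var)
        qed
        moreover have "subst \<rho> (subst \<theta> (hsub X \<sigma> v)) = subst \<theta>2 (hsub X \<sigma> v)"
          unfolding \<theta>2_def by (simp add: subst_subst)
        ultimately show ?thesis by (metis eqE.sym)
      qed
      have "eqE ar E (subst (\<lambda>v. subst \<theta>2 (hsub X \<sigma> v)) t) (subst (hsub X \<gamma>) t)"
        by (rule eqE_subst2[OF t(1)]) (rule pt)
      then have "eqE ar E (subst \<theta>2 (subst (hsub X \<sigma>) t)) (subst (hsub X \<gamma>) t)"
        by (simp add: subst_subst)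
      then show ?thesis using s1 s2 s3 tcls_eq by metis
    qed
    then show "alg_le ar E X (W, \<gamma>) (Z, \<sigma>)" unfolding al using k by (intro exI[of _ "shom W \<theta>2"]) blast
  qed
qed


lemma list_all2_carD:
  "list_all2 (\<lambda>a b. (a, b) \<in> K) as bs \<Longrightarrow> K \<subseteq> S \<times> S \<Longrightarrow> set as \<subseteq> S \<and> set bs \<subseteq> S"
  by (induction rule: list_all2_induct) auto

lemma list_all2_mapeq:
  "list_all2 (\<lambda>a b. p a = p b) as bs \<Longrightarrow> map p as = map p bs"
  by (induction rule: list_all2_induct) auto

lemma M4:
  assumes sU: "\<sigma> \<in> U_sym ar E X C P"
  shows "\<exists>Z \<sigma>'. (Z, \<sigma>') \<in> U_alg ar E X C P \<and> sym_le ar E X C \<sigma> (hsub X \<sigma>') \<and> sym_le ar E X C (hsub X \<sigma>') \<sigma>"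
proof -
  note sD = U_sym_D[OF sU]
  define \<sigma>r where "\<sigma>r v = (if v \<in> X \<union> C then \<sigma> v else Var v)" for v
  define Z where "Z = (\<Union>x\<in>X. vars (\<sigma> x))"
  have wr: "\<And>v. wf_trm ar (\<sigma>r v)" unfolding \<sigma>r_def using sD(1) by simp
  have finZ: "finite Z" unfolding Z_def using finX by (simp add: finite_vars)
  have ZC: "Z \<inter> C = {}" unfolding Z_def using sD(3) by blast
  have vr: "\<And>v. v \<in> X \<Longrightarrow> vars (\<sigma>r v) \<subseteq> Z" unfolding \<sigma>r_def Z_def by auto
  define \<sigma>' where "\<sigma>' = shom Z \<sigma>r"
  have hs: "hom ar (F X) (F Z) \<sigma>'" unfolding \<sigma>'_def by (rule shom_hom[OF wr vr])
  have key: "eqE ar E (\<sigma> v) (hsub X \<sigma>' v)" if v: "v \<in> X \<union> C" for v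
  proof (cases "v \<in> X")
    case True
    have "\<sigma>' (tcls ar E X (Var v)) = tcls ar E Z (subst \<sigma>r (Var v))"
      unfolding \<sigma>'_def by (rule shom_tcls[OF wr]) (use True in auto)
    moreover have "subst \<sigma>r (Var v) = \<sigma> v" unfolding \<sigma>r_def using True by simp
    moreover have "\<sigma>' (tcls ar E X (Var v)) = tcls ar E Z (hsub X \<sigma>' v)" by (rule hsub_props(3)[OF hs True])
    ultimately have "tcls ar E Z (\<sigma> v) = tcls ar E Z (hsub X \<sigma>' v)" by simp
    then show ?thesis by (rule tcls_eqE) (use hsub_props(1,2)[OF hs] True in auto)
  next
    case False
    then have "v \<in> C" using v by blast
    then have "\<sigma> v = Var v" "hsub X \<sigma>' v = Var v" using sD(2) False hsub_notX by auto
    then show ?thesis by (simp add: eqE.refl)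
  qed
  define p where "p = shom (Z \<union> C) (hsub X \<sigma>')"
  have vzc: "\<And>v. v \<in> X \<union> C \<Longrightarrow> vars (hsub X \<sigma>' v) \<subseteq> Z \<union> C" by (rule hsub_vars_ZC[OF hs])
  have hp: "hom ar (F (X \<union> C)) (F (Z \<union> C)) p" unfolding p_def
    by (rule shom_hom[OF hsub_props(1)[OF hs] vzc])
  have ptc: "p (tcls ar E (X \<union> C) t) = tcls ar E (Z \<union> C) (subst (hsub X \<sigma>') t)"
    if "wf_trm ar t" "vars t \<subseteq> X \<union> C" for t
    unfolding p_def by (rule shom_tcls[OF hsub_props(1)[OF hs] that])
  define K where "K = {(a, b). a \<in> car (X \<union> C) \<and> b \<in> car (X \<union> C) \<and> p a = p b}"
  have Ksub: "K \<subseteq> car (X \<union> C) \<times> car (X \<union> C)" unfolding K_def by blast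
  have cK: "congruence ar (F (X \<union> C)) K"
    unfolding congruence_def
  proof (intro conjI allI impI)
    show "equiv (car (X \<union> C)) K"
      by (rule equivI) (auto simp: K_def refl_on_def sym_def trans_def)
  next
    fix f as bs assume len: "length as = ar f" and l: "list_all2 (\<lambda>a b. (a, b) \<in> K) as bs"
    have lb: "length bs = ar f" using l len by (simp add: list_all2_lengthD)
    have sab: "set as \<subseteq> car (X \<union> C)" "set bs \<subseteq> car (X \<union> C)" using list_all2_carD[OF l Ksub] by auto
    have "list_all2 (\<lambda>a b. p a = p b) as bs" using l by (rule list_all2_mono) (simp add: K_def)
    then have mp: "map p as = map p bs" by (rule list_all2_mapeq)
    have "p (aop (F (X \<union> C)) f as) = p (aop (F (X \<union> C)) f bs)"
      using hom_op[OF hp len sab(1)] hom_op[OF hp lb sab(2)] mp by simp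
    then show "(aop (F (X \<union> C)) f as, aop (F (X \<union> C)) f bs) \<in> K"
      unfolding K_def using aop_car[OF len sab(1)] aop_car[OF lb sab(2)] by blast
  qed
  have gK: "gens \<subseteq> K"
  proof
    fix x assume "x \<in> gens"
    then obtain s t where x: "x = (tcls ar E (X \<union> C) s, tcls ar E (X \<union> C) t)" and st: "(s, t) \<in> set P" by blast
    have w: "wf_trm ar s" "wf_trm ar t" "vars s \<subseteq> X \<union> C" "vars t \<subseteq> X \<union> C" using Pwf st by auto
    have e1: "eqE ar E (subst (hsub X \<sigma>') s) (subst \<sigma> s)"
      by (rule eqE_subst2[OF w(1)]) (use eqE.sym[OF key] w(3) in blast)
    have e2: "eqE ar E (subst \<sigma> t) (subst (hsub X \<sigma>') t)"
      by (rule eqE_subst2[OF w(2)]) (use key w(4) in blast)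
    have "eqE ar E (subst (hsub X \<sigma>') s) (subst (hsub X \<sigma>') t)"
      by (rule eqE.trans[OF e1 eqE.trans[OF sD(4)[OF st] e2]])
    then have "p (tcls ar E (X \<union> C) s) = p (tcls ar E (X \<union> C) t)"
      unfolding ptc[OF w(1,3)] ptc[OF w(2,4)] by (rule tcls_eq)
    then show "x \<in> K" unfolding x K_def using w by (auto intro!: tcls_car)
  qed
  have thK: "th \<subseteq> K" by (rule th_least[OF cK gK])
  define g where "g Q = p (SOME a. a \<in> Q)" for Q
  have gq: "g (th `` {a}) = p a" if a: "a \<in> car (X \<union> C)" for a
  proof -
    have "a \<in> th `` {a}" by (rule equiv_class_self[OF th_equiv a])
    then have "(SOME b. b \<in> th `` {a}) \<in> th `` {a}" by (rule someI)
    then have "(a, SOME b. b \<in> th `` {a}) \<in> K" using thK by blast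
    then show ?thesis unfolding g_def K_def by simp
  qed
  have carA: "acarrier (alg_A ar E X C P) = car (X \<union> C) // th"
    unfolding alg_A_def quot_alg_def by simp
  have aopA: "aop (alg_A ar E X C P) f cs = th `` {aop (F (X \<union> C)) f (map (\<lambda>c. SOME a. a \<in> c) cs)}" for f cs
    unfolding alg_A_def quot_alg_def by simp
  have somec: "(SOME a. a \<in> c) \<in> car (X \<union> C)" if c: "c \<in> car (X \<union> C) // th" for c
  proof -
    obtain a where a: "a \<in> car (X \<union> C)" "c = th `` {a}" using c by (auto elim: quotientE)
    have "a \<in> c" using a equiv_class_self[OF th_equiv] by blast
    then have "(SOME a. a \<in> c) \<in> c" by (rule someI)
    then show ?thesis using a th_sub by blast
  qed
  have hg: "hom ar (alg_A ar E X C P) (F (Z \<union> C)) g"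
    unfolding hom_def carA
  proof (intro conjI allI impI ballI)
    fix Q assume "Q \<in> car (X \<union> C) // th"
    then obtain a where a: "a \<in> car (X \<union> C)" "Q = th `` {a}" by (auto elim: quotientE)
    show "g Q \<in> car (Z \<union> C)" using a gq hom_car[OF hp a(1)] by simp
  next
    fix f cs assume len: "length cs = ar f" and cs: "set cs \<subseteq> car (X \<union> C) // th"
    define as where "as = map (\<lambda>c. SOME a. a \<in> c) cs"
    have las: "length as = ar f" unfolding as_def using len by simp
    have sas: "set as \<subseteq> car (X \<union> C)" unfolding as_def using cs somec by auto
    have "g (aop (alg_A ar E X C P) f cs) = p (aop (F (X \<union> C)) f as)"
      unfolding aopA as_def[symmetric] by (rule gq[OF aop_car[OF las sas]])
    also have "\<dots> = aop (F (Z \<union> C)) f (map p as)" by (rule hom_op[OF hp las sas])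
    also have "map p as = map g cs" unfolding as_def g_def by simp
    finally show "g (aop (alg_A ar E X C P) f cs) = aop (F (Z \<union> C)) f (map g cs)" .
  qed
  have "\<forall>a\<in>car (X \<union> C). g (quot_map th a) = plus_hom ar E X C Z \<sigma>' a"
    unfolding plus_hom_eq quot_map_def p_def[symmetric] using gq by blast
  then have inU: "(Z, \<sigma>') \<in> U_alg ar E X C P"
  proof -
    have "\<exists>g. hom ar (alg_A ar E X C P) (F (Z \<union> C)) g \<and>
         (\<forall>a\<in>car (X \<union> C). g (quot_map th a) = plus_hom ar E X C Z \<sigma>' a)"
      using hg \<open>\<forall>a\<in>car (X \<union> C). _\<close> by (intro exI[of _ g]) blast
    then show ?thesis unfolding U_alg_def using finZ ZC hs by simp
  qed
  have l1: "sym_le ar E X C \<sigma> (hsub X \<sigma>')" unfolding sym_le_def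
    by (rule exI[of _ Var]) (simp add: subst_Var key)
  have l2: "sym_le ar E X C (hsub X \<sigma>') \<sigma>" unfolding sym_le_def
    by (rule exI[of _ Var]) (simp add: subst_Var eqE.sym[OF key])
  show ?thesis using inU l1 l2 by blast
qed

lemma main: "posetal_reflections_iso (U_alg ar E X C P) (alg_le ar E X) (U_sym ar E X C P) (sym_le ar E X C)"
proof (rule iso_lemma[where F="\<lambda>(Z, \<sigma>). hsub X \<sigma>"])
  show "\<And>b. b \<in> U_sym ar E X C P \<Longrightarrow> sym_le ar E X C b b" by (rule sym_le_refl)
  show "\<And>a b c. a \<in> U_sym ar E X C P \<Longrightarrow> b \<in> U_sym ar E X C P \<Longrightarrow> c \<in> U_sym ar E X C P \<Longrightarrow>
     sym_le ar E X C a b \<Longrightarrow> sym_le ar E X C b c \<Longrightarrow> sym_le ar E X C a c"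
    by (rule sym_le_trans)
  show "\<And>x. x \<in> U_alg ar E X C P \<Longrightarrow> (case x of (Z, \<sigma>) \<Rightarrow> hsub X \<sigma>) \<in> U_sym ar E X C P"
    using M1 by auto
  show "\<And>x y. x \<in> U_alg ar E X C P \<Longrightarrow> y \<in> U_alg ar E X C P \<Longrightarrow>
      alg_le ar E X x y = sym_le ar E X C (case x of (Z, \<sigma>) \<Rightarrow> hsub X \<sigma>) (case y of (Z, \<sigma>) \<Rightarrow> hsub X \<sigma>)"
    using M2 by auto
  fix b assume "b \<in> U_sym ar E X C P"
  then obtain Z \<sigma>' where "(Z, \<sigma>') \<in> U_alg ar E X C P" "sym_le ar E X C b (hsub X \<sigma>')" "sym_le ar E X C (hsub X \<sigma>') b"
    using M4 by blast
  then show "\<exists>x\<in>U_alg ar E X C P.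
      sym_le ar E X C b (case x of (Z, \<sigma>) \<Rightarrow> hsub X \<sigma>) \<and> sym_le ar E X C (case x of (Z, \<sigma>) \<Rightarrow> hsub X \<sigma>) b"
    by (intro bexI[of _ "(Z, \<sigma>')"]) auto
qed

end

theorem mainTheorem4:
  fixes ar :: "'f \<Rightarrow> nat"
    and E :: "(('f, 'v) trm \<times> ('f, 'v) trm) set"
    and X C :: "'v set"
    and P :: "(('f, 'v) trm \<times> ('f, 'v) trm) list"
  assumes "\<exists>f. ar f = 0"
    and "infinite (UNIV :: 'v set)"
    and "\<forall>(l, r)\<in>E. wf_trm ar l \<and> wf_trm ar r"
    and "finite X" and "finite C" and "X \<inter> C = {}"
    and "\<forall>(s, t)\<in>set P. wf_trm ar s \<and> wf_trm ar t \<and> vars s \<subseteq> X \<union> C \<and> vars t \<subseteq> X \<union> C"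
  shows "posetal_reflections_iso (U_alg ar E X C P) (alg_le ar E X)
           (U_sym ar E X C P) (sym_le ar E X C)"
proof -
  interpret setting ar E X C P
    by unfold_locales (use assms in auto)
  show ?thesis by (rule main)
qed


end
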